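(* Let $\lambda=(\lambda_1,\dots,\lambda_d)$ be a partition of $n\ge2$. For distinct $i,j\in\{0,\dots,n-2\}$, we have $i\preceq j$ in $P(\lambda)$ if and only if $i<j$ and for each $t\in\{1,\dots,d\}$ one of the following holds: (1) $s_{t,i}>s_{t,j}>0$; (2) $s_{t,i}=0$ and $s_{t,j}=s_{t,j-i}$; (3) $s_{t,j}=s_{t,i}>0$ and $s_{t,j-i}=0$.
   Context: $\Delta_\lambda=\mathrm{conv}(e_1,\dots,e_d,\lambda)\subset\mathbb{R}^d$, with fundamental parallelepiped $\Pi_\lambda=\{\sum_{i=1}^d\gamma_i(1,e_i)+\gamma_{d+1}(1,\lambda):0\le\gamma_i<1\}\subset\mathbb{R}^{d+1}$. $P(\lambda)$ is $\Pi_\lambda\cap\mathbb{Z}^{d+1}$ ordered by $\sigma\preceq\mu$ iff $\mu-\sigma\in\Pi_\lambda\cap\mathbb{Z}^{d+1}$. For $0\le b<n-1$ set $p(b)=\left(\sum_{t}\lceil b\lambda_t/(n-1)\rceil-b,\ \lceil b\lambda_1/(n-1)\rceil,\dots,\lceil b\lambda_d/(n-1)\rceil\right)$; $b\mapsto p(b)$ is a bijection from $\{0,\dots,n-2\}$ onto $\Pi_\lambda\cap\mathbb{Z}^{d+1}$ and each integer $b$ is identified with $p(b)$. For $0\le i<n-1$ and $1\le t\le d$, the integers $r_{t,i}\ge0$ and $0\le s_{t,i}<n-1$ are defined by $i\lambda_t=r_{t,i}(n-1)+s_{t,i}$. *)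

theory Defs
  imports Complex_Main
begin

text \<open>A partition lambda = (lambda_1,...,lambda_d) is a list lam of length d;
  lambda_t = lam ! (t-1) for 1 <= t <= d.  Points of R^(d+1) are represented as
  functions nat => real with coordinates indexed 0..d (coordinate 0 is the
  first coordinate), and value 0 outside {0..d}.\<close>

definition is_partition :: "nat list \<Rightarrow> nat \<Rightarrow> bool" where
  "is_partition lam n \<longleftrightarrow> sorted (rev lam) \<and> (\<forall>x\<in>set lam. 0 < x) \<and> sum_list lam = n"

definition gen_e :: "nat \<Rightarrow> nat \<Rightarrow> real" where
  "gen_e i k = (if k = 0 then 1 else if k = i then 1 else 0)"

definition gen_lam :: "nat list \<Rightarrow> nat \<Rightarrow> real" where
  "gen_lam lam k = (if k = 0 then 1 else if k \<le> length lam then real (lam ! (k - 1)) else 0)"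

definition fund_pp :: "nat list \<Rightarrow> (nat \<Rightarrow> real) set" where
  "fund_pp lam = {x. \<exists>\<gamma>::nat \<Rightarrow> real.
      (\<forall>i\<in>{1..length lam + 1}. 0 \<le> \<gamma> i \<and> \<gamma> i < 1) \<and>
      x = (\<lambda>k. (\<Sum>i=1..length lam. \<gamma> i * gen_e i k) + \<gamma> (length lam + 1) * gen_lam lam k)}"

definition fund_pp_lattice :: "nat list \<Rightarrow> (nat \<Rightarrow> real) set" where
  "fund_pp_lattice lam = {x \<in> fund_pp lam. \<forall>k. x k \<in> \<int>}"

definition P_le :: "nat list \<Rightarrow> (nat \<Rightarrow> real) \<Rightarrow> (nat \<Rightarrow> real) \<Rightarrow> bool" where
  "P_le lam \<sigma> \<mu> \<longleftrightarrow> \<sigma> \<in> fund_pp_lattice lam \<and> \<mu> \<in> fund_pp_lattice lam \<and>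
      (\<lambda>k. \<mu> k - \<sigma> k) \<in> fund_pp_lattice lam"

definition p_pt :: "nat list \<Rightarrow> nat \<Rightarrow> nat \<Rightarrow> real" where
  "p_pt lam b k = (let n = sum_list lam in
     if k = 0 then (\<Sum>t=1..length lam. real_of_int \<lceil>real b * real (lam ! (t-1)) / real (n - 1)\<rceil>) - real b
     else if k \<le> length lam then real_of_int \<lceil>real b * real (lam ! (k-1)) / real (n - 1)\<rceil>
     else 0)"

definition s_rem :: "nat list \<Rightarrow> nat \<Rightarrow> nat \<Rightarrow> nat" where
  "s_rem lam t i = (i * (lam ! (t-1))) mod (sum_list lam - 1)"

end

theory Submission
  imports Defs
begin

lemma ceil_nat_div:
  assumes "m > 0"
  shows "\<lceil>real a / real m\<rceil> = int (a div m) + (if a mod m = 0 then 0 else 1)"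
proof -
  have a: "a = m * (a div m) + a mod m" by simp
  have lt: "a mod m < m" using assms by simp
  show ?thesis
  proof (cases "a mod m = 0")
    case True
    then have "real a / real m = real (a div m)" using assms a
      by (metis mult.commute nonzero_mult_div_cancel_left of_nat_0_less_iff of_nat_mult add_0_right less_irrefl)
    then show ?thesis using True by simp
  next
    case False
    have "real a = real m * real (a div m) + real (a mod m)" using a
      by (metis of_nat_add of_nat_mult)
    then have e: "real a / real m = real (a div m) + real (a mod m) / real m" using assms
      by (simp add: field_simps)
    have "0 < real (a mod m) / real m" "real (a mod m) / real m < 1" using False lt assms by auto
    then show ?thesis using False e by (intro ceiling_unique) auto
  qed
qed

lemma divmod_simple:
  fixes m q r :: nat
  assumes "r < m" shows "(m*q + r) div m = q" "(m*q + r) mod m = r"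
  using assms by (auto simp: add.commute)

lemma arith_key0:
  assumes m: "m > 0" and ab: "a \<le> b"
  shows "(\<lceil>real b / real m\<rceil> - \<lceil>real a / real m\<rceil> = \<lceil>real (b - a) / real m\<rceil>) \<longleftrightarrow>
    ((a mod m > b mod m \<and> b mod m > 0) \<or> (a mod m = 0 \<and> b mod m = (b - a) mod m)
     \<or> (b mod m = a mod m \<and> a mod m > 0 \<and> (b - a) mod m = 0))"
proof -
  define qa ra qb rb where "qa = a div m" "ra = a mod m" "qb = b div m" "rb = b mod m"
  have A: "a = m*qa + ra" "b = m*qb+rb" "ra < m" "rb < m" using m by (auto simp: qa_ra_qb_rb_def)
  show ?thesis
  proof (cases "ra \<le> rb")
    case True
    have "qa \<le> qb"
    proof (rule ccontr)
      assume "\<not> qa \<le> qb"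
      then have "qb + 1 \<le> qa" by simp
      then have "m*(qb + 1) \<le> m*qa" by (rule mult_le_mono2)
      then have "m*qb + m \<le> m*qa" by (simp add: algebra_simps)
      then show False using A ab by linarith
    qed
    then have e1: "m*(qb - qa) = m*qb - m*qa" "m*qa \<le> m*qb" by (auto simp: diff_mult_distrib2)
    then have E: "b - a = m*(qb - qa) + (rb - ra)" using A True by linarith
    have D: "(b - a) div m = qb - qa" "(b - a) mod m = rb - ra" unfolding E using A
      by (simp_all add: divmod_simple less_imp_diff_less)
    show ?thesis unfolding ceil_nat_div[OF m]
      using D A True \<open>qa \<le> qb\<close> by (auto simp: qa_ra_qb_rb_def[symmetric] split: if_splits)
  next
    case False
    have "qa < qb"
    proof (rule ccontr)
      assume "\<not> qa < qb"
      then have "m*qb \<le> m*qa" by simp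
      then show False using A ab False by linarith
    qed
    have E: "b - a = m*(qb - qa - 1) + (m + rb - ra)"
    proof -
      have "qb - qa - 1 + 1 = qb - qa" using \<open>qa < qb\<close> by simp
      then have "m*(qb - qa - 1) + m = m * (qb - qa)" by (metis add_mult_distrib2 nat_mult_1_right)
      moreover have "m*qa + m*(qb-qa) = m*qb" using \<open>qa < qb\<close>
        by (simp add: add_mult_distrib2[symmetric])
      ultimately show ?thesis using A False by linarith
    qed
    have "m + rb - ra < m" using A False by linarith
    then have D: "(b - a) div m = qb - qa - 1" "(b - a) mod m = m + rb - ra" unfolding E
      by (simp_all add: divmod_simple)
    show ?thesis unfolding ceil_nat_div[OF m]
      using D A False \<open>qa < qb\<close> by (auto simp: qa_ra_qb_rb_def[symmetric] split: if_splits)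
  qed
qed

lemma sum_lam: "(\<Sum>k=1..length lam. real (lam!(k-1))) = real (sum_list lam)"
proof -
  have "sum_list lam = (\<Sum>i<length lam. lam!i)" by (simp add: sum_list_sum_nth atLeast0LessThan)
  then have "real (sum_list lam) = (\<Sum>i<length lam. real (lam!i))" by simp
  moreover have "(\<Sum>k=1..length lam. real (lam!(k-1))) = (\<Sum>i<length lam. real (lam!i))"
    using sum.atLeast1_atMost_eq[of "\<lambda>k. real (lam!(k-1))" "length lam"] by simp
  ultimately show ?thesis by simp
qed

lemma eval_coord:
  "(\<Sum>i=1..length lam. \<gamma> i * gen_e i k) + \<gamma> (length lam+1) * gen_lam lam k =
   (if k=0 then (\<Sum>i=1..length lam. \<gamma> i) + \<gamma> (length lam+1)
    else if k \<le> length lam then \<gamma> k + \<gamma> (length lam+1) * real(lam!(k-1)) else 0)"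
proof (cases "k = 0")
  case True then show ?thesis by (simp add: gen_e_def gen_lam_def)
next
  case False
  have "(\<Sum>i=1..length lam. \<gamma> i * gen_e i k) = (\<Sum>i=1..length lam. if k = i then \<gamma> i else 0)"
    using False by (intro sum.cong) (auto simp: gen_e_def)
  also have "\<dots> = (if k \<in> {1..length lam} then \<gamma> k else 0)" by (simp add: sum.delta)
  finally show ?thesis using False by (auto simp: gen_lam_def)
qed

lemma char_fwd:
  assumes "x \<in> fund_pp lam"
  shows "\<exists>c. 0 \<le> c \<and> c < 1 \<and>
    (\<forall>k\<in>{1..length lam}. 0 \<le> x k - c * real (lam!(k-1)) \<and> x k - c * real (lam!(k-1)) < 1) \<and>
    x 0 = (\<Sum>k=1..length lam. x k - c * real (lam!(k-1))) + c"
proof -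
  obtain \<gamma> where g: "\<forall>i\<in>{1..length lam + 1}. 0 \<le> \<gamma> i \<and> \<gamma> i < 1"
    and x: "x = (\<lambda>k. (\<Sum>i=1..length lam. \<gamma> i * gen_e i k) + \<gamma> (length lam + 1) * gen_lam lam k)"
    using assms unfolding fund_pp_def by blast
  define c where "c = \<gamma> (length lam + 1)"
  have xk: "x k = (if k=0 then (\<Sum>i=1..length lam. \<gamma> i) + c
    else if k \<le> length lam then \<gamma> k + c * real(lam!(k-1)) else 0)" for k
    unfolding c_def by (subst x) (rule eval_coord)
  have k: "x k - c * real (lam!(k-1)) = \<gamma> k" if "k \<in> {1..length lam}" for k
    using that xk[of k] by auto
  show ?thesis
  proof (intro exI conjI ballI)
    show "0 \<le> c" "c < 1" using g unfolding c_def by auto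
    fix k assume kk: "k \<in> {1..length lam}"
    show "0 \<le> x k - c * real (lam!(k-1))" "x k - c * real (lam!(k-1)) < 1"
      using k[OF kk] g kk by auto
  next
    have "(\<Sum>k=1..length lam. x k - c * real (lam!(k-1))) = (\<Sum>i=1..length lam. \<gamma> i)"
      using k by (rule sum.cong[OF refl])
    then show "x 0 = (\<Sum>k=1..length lam. x k - c * real (lam!(k-1))) + c" using xk[of 0] by simp
  qed
qed

lemma char_bwd:
  assumes "0 \<le> c" "c < 1"
    "\<forall>k\<in>{1..length lam}. 0 \<le> x k - c * real (lam!(k-1)) \<and> x k - c * real (lam!(k-1)) < 1"
    "x 0 = (\<Sum>k=1..length lam. x k - c * real (lam!(k-1))) + c"
    "\<forall>k>length lam. x k = 0"
  shows "x \<in> fund_pp lam"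
proof -
  define \<gamma> where "\<gamma> = (\<lambda>t. if t \<le> length lam then x t - c * real (lam!(t-1)) else c)"
  have g: "\<forall>i\<in>{1..length lam + 1}. 0 \<le> \<gamma> i \<and> \<gamma> i < 1"
    using assms unfolding \<gamma>_def by auto
  have c: "\<gamma> (length lam + 1) = c" unfolding \<gamma>_def by simp
  have "x = (\<lambda>k. (\<Sum>i=1..length lam. \<gamma> i * gen_e i k) + \<gamma> (length lam + 1) * gen_lam lam k)"
  proof
    fix k
    have s: "(\<Sum>i=1..length lam. \<gamma> i) = (\<Sum>k=1..length lam. x k - c * real (lam!(k-1)))"
      unfolding \<gamma>_def by (rule sum.cong) auto
    show "x k = (\<Sum>i=1..length lam. \<gamma> i * gen_e i k) + \<gamma> (length lam + 1) * gen_lam lam k"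
      unfolding eval_coord unfolding c using assms(4,5) s by (auto simp: \<gamma>_def)
  qed
  then show ?thesis unfolding fund_pp_def using g by blast
qed

lemma pk:
  assumes "k \<in> {1..length lam}"
  shows "p_pt lam b k = of_int \<lceil>real (b * lam!(k-1)) / real (sum_list lam - 1)\<rceil>"
  using assms by (auto simp: p_pt_def Let_def)

lemma p0:
  "p_pt lam b 0 = (\<Sum>k=1..length lam. p_pt lam b k) - real b"
proof -
  have "(\<Sum>k=1..length lam. p_pt lam b k) = (\<Sum>t=1..length lam. real_of_int \<lceil>real b * real (lam ! (t-1)) / real (sum_list lam - 1)\<rceil>)"
    by (rule sum.cong) (auto simp: p_pt_def Let_def)
  then show ?thesis by (simp add: p_pt_def Let_def)
qed

lemma p_out: "k > length lam \<Longrightarrow> p_pt lam b k = 0"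
  by (simp add: p_pt_def Let_def)

lemma p_in:
  assumes "b < sum_list lam - 1"
  shows "p_pt lam b \<in> fund_pp_lattice lam"
proof -
  define m where "m = sum_list lam - 1"
  have m: "m > 0" "real (sum_list lam) = real m + 1" using assms unfolding m_def by auto
  define c where "c = real b / real m"
  have cL: "c * real (lam!(k-1)) = real (b * lam!(k-1)) / real m" for k
    unfolding c_def by simp
  have i1: "p_pt lam b k \<in> \<int>" if "k \<in> {1..length lam}" for k
    using pk[OF that] by simp
  have int: "p_pt lam b k \<in> \<int>" for k
  proof -
    consider "k = 0" | "k \<in> {1..length lam}" | "k > length lam" by force
    then show ?thesis
    proof cases
      case 1
      have "(\<Sum>k=1..length lam. p_pt lam b k) \<in> \<int>" using i1 by (rule Ints_sum)
      then show ?thesis unfolding 1 p0 by (intro Ints_diff) simp_all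
    next
      case 2 then show ?thesis by (rule i1)
    next
      case 3 then show ?thesis using p_out by simp
    qed
  qed
  have "p_pt lam b \<in> fund_pp lam"
  proof (rule char_bwd[where c=c])
    show "0 \<le> c" unfolding c_def by simp
    have "real b < real m" using assms unfolding m_def by simp
    then show "c < 1" unfolding c_def using m(1) by simp
    show "\<forall>k\<in>{1..length lam}. 0 \<le> p_pt lam b k - c * real (lam!(k-1)) \<and> p_pt lam b k - c * real (lam!(k-1)) < 1"
    proof
      fix k assume kk: "k \<in> {1..length lam}"
      have cc: "0 \<le> of_int \<lceil>y\<rceil> - y \<and> of_int \<lceil>y\<rceil> - y < (1::real)" for y
        using ceiling_correct[of y] by linarith
      show "0 \<le> p_pt lam b k - c * real (lam!(k-1)) \<and> p_pt lam b k - c * real (lam!(k-1)) < 1"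
        unfolding cL pk[OF kk] m_def by (rule cc)
    qed
    show "\<forall>k>length lam. p_pt lam b k = 0" using p_out by blast
    have "(\<Sum>k=1..length lam. p_pt lam b k - c * real (lam!(k-1))) + c
       = (\<Sum>k=1..length lam. p_pt lam b k) - c * (\<Sum>k=1..length lam. real (lam!(k-1))) + c"
      by (simp only: sum_subtractf sum_distrib_left)
    also have "\<dots> = (\<Sum>k=1..length lam. p_pt lam b k) - real b"
      unfolding sum_lam m(2) c_def using m(1) by (simp add: field_simps)
    finally show "p_pt lam b 0 = (\<Sum>k=1..length lam. p_pt lam b k - c * real (lam!(k-1))) + c"
      using p0 by simp
  qed
  then show ?thesis using int unfolding fund_pp_lattice_def by blast
qed


lemma ceil_eq_of_real:
  fixes z :: int and y :: real
  assumes "0 \<le> of_int z - y" "of_int z - y < 1"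
  shows "\<lceil>y\<rceil> = z"
  using assms by (intro ceiling_unique) linarith+

theorem theorem2p17:
  fixes lam :: "nat list" and n i j :: nat
  assumes "n \<ge> 2" and "is_partition lam n"
    and "i < n - 1" and "j < n - 1" and "i \<noteq> j"
  shows "P_le lam (p_pt lam i) (p_pt lam j) \<longleftrightarrow>
    (i < j \<and> (\<forall>t\<in>{1..length lam}.
        (s_rem lam t i > s_rem lam t j \<and> s_rem lam t j > 0)
      \<or> (s_rem lam t i = 0 \<and> s_rem lam t j = s_rem lam t (j - i))
      \<or> (s_rem lam t j = s_rem lam t i \<and> s_rem lam t i > 0 \<and> s_rem lam t (j - i) = 0)))"
    (is "?L \<longleftrightarrow> (i < j \<and> (\<forall>t\<in>{1..length lam}. ?C t))")
proof -
  have sl: "sum_list lam = n" using assms(2) unfolding is_partition_def by simp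
  define m where "m = n - 1"
  have mpos: "m > 0" using assms(3) unfolding m_def by simp
  have slm: "sum_list lam - 1 = m" unfolding sl m_def ..
  have rsl: "real (sum_list lam) = real m + 1" using sl mpos unfolding m_def by simp
  have srem: "s_rem lam t b = (b * lam!(t-1)) mod m" for t b
    unfolding s_rem_def slm ..
  have pk': "p_pt lam b t = of_int \<lceil>real (b * lam!(t-1)) / real m\<rceil>" if "t \<in> {1..length lam}" for b t
    using pk[OF that] unfolding slm .
  have pi: "p_pt lam i \<in> fund_pp_lattice lam" and pj: "p_pt lam j \<in> fund_pp_lattice lam"
    using assms(3,4) slm unfolding m_def by (auto intro!: p_in)
  have key: "(p_pt lam j t - p_pt lam i t = p_pt lam (j-i) t) \<longleftrightarrow> ?C t"
    if t: "t \<in> {1..length lam}" and ij: "i \<le> j" for t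
  proof -
    define l where "l = lam!(t-1)"
    have il: "i * l \<le> j * l" using ij by simp
    have dl: "(j - i) * l = j * l - i * l" by (simp add: diff_mult_distrib)
    have "(p_pt lam j t - p_pt lam i t = p_pt lam (j-i) t) \<longleftrightarrow>
      (\<lceil>real (j*l) / real m\<rceil> - \<lceil>real (i*l) / real m\<rceil> = \<lceil>real (j*l - i*l) / real m\<rceil>)"
      unfolding pk'[OF t] l_def[symmetric] dl
      by (metis of_int_diff of_int_eq_iff)
    also have "\<dots> \<longleftrightarrow> ?C t"
      unfolding arith_key0[OF mpos il] srem l_def[symmetric] dl ..
    finally show ?thesis .
  qed
  have p0d: "(\<Sum>k=1..length lam. p_pt lam j k - p_pt lam i k) - (p_pt lam j 0 - p_pt lam i 0)
      = real j - real i"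
    using p0[of lam j] p0[of lam i] by (simp add: sum_subtractf)
  show ?thesis
  proof
    assume P: ?L
    then have x: "(\<lambda>k. p_pt lam j k - p_pt lam i k) \<in> fund_pp lam"
      unfolding P_le_def fund_pp_lattice_def by blast
    obtain c where c0: "0 \<le> c" and c1: "c < 1"
      and ck: "\<forall>k\<in>{1..length lam}. 0 \<le> (p_pt lam j k - p_pt lam i k) - c * real (lam!(k-1))
           \<and> (p_pt lam j k - p_pt lam i k) - c * real (lam!(k-1)) < 1"
      and cx: "p_pt lam j 0 - p_pt lam i 0 = (\<Sum>k=1..length lam. (p_pt lam j k - p_pt lam i k) - c * real (lam!(k-1))) + c"
      using char_fwd[OF x] by blast
    have "(\<Sum>k=1..length lam. (p_pt lam j k - p_pt lam i k) - c * real (lam!(k-1)))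
       = (\<Sum>k=1..length lam. p_pt lam j k - p_pt lam i k) - c * (\<Sum>k=1..length lam. real (lam!(k-1)))"
      by (simp only: sum_subtractf sum_distrib_left)
    also have "\<dots> = (\<Sum>k=1..length lam. p_pt lam j k - p_pt lam i k) - c * (real m + 1)"
      unfolding sum_lam rsl ..
    finally have "c * real m = real j - real i" using cx p0d by (simp add: algebra_simps)
    then have cm: "c = (real j - real i) / real m" using mpos by (simp add: field_simps)
    have "real i \<le> real j" using \<open>c * real m = real j - real i\<close> c0 mpos
      by (metis diff_ge_0_iff_ge mult_nonneg_nonneg of_nat_0_le_iff)
    then have ij: "i < j" using assms(5) by simp
    then have cm2: "c = real (j - i) / real m" using cm by (simp add: of_nat_diff)
    have "\<forall>t\<in>{1..length lam}. ?C t"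
    proof
      fix t assume t: "t \<in> {1..length lam}"
      have cl: "c * real (lam!(t-1)) = real ((j - i) * lam!(t-1)) / real m"
        unfolding cm2 by simp
      have e: "p_pt lam j t - p_pt lam i t = of_int (\<lceil>real (j * lam!(t-1)) / real m\<rceil> - \<lceil>real (i * lam!(t-1)) / real m\<rceil>)"
        unfolding pk'[OF t] by simp
      have ckt: "0 \<le> (p_pt lam j t - p_pt lam i t) - c * real (lam!(t-1))
           \<and> (p_pt lam j t - p_pt lam i t) - c * real (lam!(t-1)) < 1"
        using ck t by blast
      then have ckt2: "0 \<le> of_int (\<lceil>real (j * lam!(t-1)) / real m\<rceil> - \<lceil>real (i * lam!(t-1)) / real m\<rceil>) - real ((j - i) * lam!(t-1)) / real m
           \<and> of_int (\<lceil>real (j * lam!(t-1)) / real m\<rceil> - \<lceil>real (i * lam!(t-1)) / real m\<rceil>) - real ((j - i) * lam!(t-1)) / real m < 1"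
        unfolding e cl .
      have "\<lceil>real ((j - i) * lam!(t-1)) / real m\<rceil> = \<lceil>real (j * lam!(t-1)) / real m\<rceil> - \<lceil>real (i * lam!(t-1)) / real m\<rceil>"
        using ceil_eq_of_real[OF conjunct1[OF ckt2] conjunct2[OF ckt2]] .
      then have "p_pt lam j t - p_pt lam i t = p_pt lam (j-i) t"
        unfolding e pk'[OF t] by simp
      then show "?C t" using key[OF t] ij by simp
    qed
    then show "i < j \<and> (\<forall>t\<in>{1..length lam}. ?C t)" using ij by blast
  next
    assume R: "i < j \<and> (\<forall>t\<in>{1..length lam}. ?C t)"
    then have ij: "i < j" and C: "\<And>t. t \<in> {1..length lam} \<Longrightarrow> ?C t" by auto
    have eqk: "p_pt lam j t - p_pt lam i t = p_pt lam (j-i) t" if t: "t \<in> {1..length lam}" for t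
      using key[OF t] C[OF t] ij by simp
    have eq: "(\<lambda>k. p_pt lam j k - p_pt lam i k) = p_pt lam (j - i)"
    proof
      fix k
      consider "k = 0" | "k \<in> {1..length lam}" | "k > length lam" by force
      then show "p_pt lam j k - p_pt lam i k = p_pt lam (j - i) k"
      proof cases
        case 1
        have "(\<Sum>k=1..length lam. p_pt lam j k - p_pt lam i k) = (\<Sum>k=1..length lam. p_pt lam (j-i) k)"
          using eqk by (rule sum.cong[OF refl])
        then show ?thesis unfolding 1 using p0d p0[of lam "j-i"] ij by (simp add: of_nat_diff)
      next
        case 2 then show ?thesis by (rule eqk)
      next
        case 3 then show ?thesis using p_out by simp
      qed
    qed
    have "j - i < sum_list lam - 1" using assms(4) slm unfolding m_def by simp
    then have "p_pt lam (j - i) \<in> fund_pp_lattice lam" by (rule p_in)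
    then show ?L unfolding P_le_def eq using pi pj by blast
  qed
qed

end
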